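(* Let $n\ge 3$, $R>0$, let $P$ be a nonnegative $C^1$ function on $(0,R)$ such that the equation $y''+\frac1r y'+P(r)y=0$ has a positive solution on $(0,R)$, and let $0\le\lambda\le n-2$. Then the pair $$\Big(r^{-\lambda},\ \Big(\frac{n-\lambda-2}{2}\Big)^2r^{-\lambda-2}+r^{-\lambda}P(r)\Big)$$ is an $n$-dimensional Bessel pair on $(0,R)$.
   Context: A pair $(V,W)$ of positive functions on $(0,R)$ is called an $n$-dimensional Bessel pair on $(0,R)$ if the equation $y''(r)+\big(\frac{n-1}{r}+\frac{V_r(r)}{V(r)}\big)y'(r)+\frac{W(r)}{V(r)}y(r)=0$ has a positive solution on $(0,R)$, where $V_r$ denotes the derivative of $V$. *)

theory Defs
  imports "HOL-Analysis.Analysis"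
begin

definition has_pos_solution :: "real \<Rightarrow> (real \<Rightarrow> real) \<Rightarrow> (real \<Rightarrow> real) \<Rightarrow> bool" where
  "has_pos_solution R p q \<longleftrightarrow>
     (\<exists>y y' y''. \<forall>r\<in>{0<..<R}.
        y r > 0 \<and>
        (y has_real_derivative y' r) (at r) \<and>
        (y' has_real_derivative y'' r) (at r) \<and>
        y'' r + p r * y' r + q r * y r = 0)"

definition bessel_pair :: "nat \<Rightarrow> real \<Rightarrow> (real \<Rightarrow> real) \<Rightarrow> (real \<Rightarrow> real) \<Rightarrow> bool" where
  "bessel_pair n R V W \<longleftrightarrow>
     (\<forall>r\<in>{0<..<R}. V r > 0 \<and> W r \<ge> 0 \<and> V differentiable (at r)) \<and>
     has_pos_solution R (\<lambda>r. (real n - 1) / r + deriv V r / V r) (\<lambda>r. W r / V r)"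

end

theory Submission
  imports Defs
begin

theorem mainTheorem3:
  fixes n :: nat and R lam :: real and P :: "real \<Rightarrow> real"
  assumes "n \<ge> 3" and "R > 0"
    and "\<forall>r\<in>{0<..<R}. P r \<ge> 0"
    and "\<forall>r\<in>{0<..<R}. P differentiable (at r)"
    and "continuous_on {0<..<R} (deriv P)"
    and "has_pos_solution R (\<lambda>r. 1 / r) P"
    and "0 \<le> lam" and "lam \<le> real n - 2"
  shows "bessel_pair n R (\<lambda>r. r powr (-lam))
           (\<lambda>r. ((real n - lam - 2) / 2)^2 * r powr (-lam - 2) + r powr (-lam) * P r)"
proof -
  define a where "a = (real n - lam - 2) / 2"
  have a0: "a \<ge> 0" using assms(8) by (simp add: a_def)
  obtain y y' y'' where Y: "\<forall>r\<in>{0<..<R}. y r > 0 \<and>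
        (y has_real_derivative y' r) (at r) \<and>
        (y' has_real_derivative y'' r) (at r) \<and>
        y'' r + 1 / r * y' r + P r * y r = 0"
    using assms(6) unfolding has_pos_solution_def by blast
  have dV: "((\<lambda>r. r powr (-lam)) has_real_derivative (-lam) * r powr (-lam - 1)) (at r)" if "r > 0" for r
    using has_real_derivative_powr[OF that, of "-lam"] by simp
  define z where "z r = r powr (-a) * y r" for r
  define z' where "z' r = r powr (-a) * y' r - a * (r powr (-a-1) * y r)" for r
  define z'' where "z'' r = (-a) * r powr (-a-1) * y' r + r powr (-a) * y'' r
      - a * ((-a-1) * r powr (-a-2) * y r + r powr (-a-1) * y' r)" for r
  have sol: "z r > 0 \<and> (z has_real_derivative z' r) (at r) \<and> (z' has_real_derivative z'' r) (at r) \<and>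
     z'' r + ((real n - 1) / r + deriv (\<lambda>r. r powr (-lam)) r / r powr (-lam)) * z' r
     + (((real n - lam - 2) / 2)^2 * r powr (-lam - 2) + r powr (-lam) * P r) / r powr (-lam) * z r = 0"
    if r: "r \<in> {0<..<R}" for r
  proof -
    have rp: "r > 0" using r by simp
    from Y r have y: "y r > 0" "(y has_real_derivative y' r) (at r)"
      "(y' has_real_derivative y'' r) (at r)" "y'' r + 1 / r * y' r + P r * y r = 0" by auto
    have p1: "((\<lambda>r. r powr (-a)) has_real_derivative (-a) * r powr (-a - 1)) (at r)"
      using has_real_derivative_powr[OF rp, of "-a"] by simp
    have p2: "((\<lambda>r. r powr (-a-1)) has_real_derivative (-a-1) * r powr (-a - 2)) (at r)"
      using has_real_derivative_powr[OF rp, of "-a-1"] by (simp add: algebra_simps)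
    have d1: "(z has_real_derivative z' r) (at r)"
      unfolding z_def z'_def
      using DERIV_mult[OF p1 y(2)] by (simp add: algebra_simps)
    have d2: "(z' has_real_derivative z'' r) (at r)"
      unfolding z'_def z''_def
      using DERIV_diff[OF DERIV_mult[OF p1 y(3)] DERIV_cmult[OF DERIV_mult[OF p2 y(2)], of a]]
      by (simp add: algebra_simps)
    have dd: "deriv (\<lambda>r. r powr (-lam)) r = (-lam) * r powr (-lam - 1)"
      using DERIV_imp_deriv[OF dV[OF rp]] .
    have e1: "r powr (-lam - 1) = r powr (-lam) / r"
      using rp by (simp add: powr_diff)
    have e2: "r powr (-lam - 2) = r powr (-lam) / r^2"
      using rp by (simp add: powr_diff)
    have f1: "r powr (-a - 1) = r powr (-a) / r"
      using rp by (simp add: powr_diff)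
    have f2: "r powr (-a - 2) = r powr (-a) / r^2"
      using rp by (simp add: powr_diff)
    have lp: "r powr (-lam) > 0" "r powr (-a) > 0" using rp by auto
    have eq: "z'' r + ((real n - 1) / r + deriv (\<lambda>r. r powr (-lam)) r / r powr (-lam)) * z' r
     + (((real n - lam - 2) / 2)^2 * r powr (-lam - 2) + r powr (-lam) * P r) / r powr (-lam) * z r
     = r powr (-a) * (y'' r + 1 / r * y' r + P r * y r)"
    proof -
      have c: "real n - 1 - lam = 2 * a + 1" unfolding a_def by (simp add: field_simps)
      have "z'' r + ((real n - 1) / r + deriv (\<lambda>r. r powr (-lam)) r / r powr (-lam)) * z' r
        + (((real n - lam - 2) / 2)^2 * r powr (-lam - 2) + r powr (-lam) * P r) / r powr (-lam) * z r
        = z'' r + ((real n - 1 - lam) / r) * z' r + (a^2 / r^2 + P r) * z r"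
        using lp rp unfolding dd e1 e2 a_def by (simp add: field_simps)
      also have "\<dots> = r powr (-a) * (y'' r + 1 / r * y' r + P r * y r)"
        unfolding c z_def z'_def z''_def f1 f2 using rp
        by (simp add: field_simps power2_eq_square)
      finally show ?thesis .
    qed
    show ?thesis using d1 d2 eq y lp by (simp add: z_def)
  qed
  show ?thesis
    unfolding bessel_pair_def has_pos_solution_def
  proof (intro conjI ballI)
    fix r assume r: "r \<in> {0<..<R}"
    then have rp: "r > 0" by simp
    show "r powr (-lam) > 0" using rp by simp
    show "(\<lambda>r. r powr (-lam)) differentiable (at r)"
      using dV[OF rp] real_differentiable_def by blast
    show "((real n - lam - 2) / 2)^2 * r powr (-lam - 2) + r powr (-lam) * P r \<ge> 0"
      using assms(3) r rp by (intro add_nonneg_nonneg mult_nonneg_nonneg) auto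
  next
    show "\<exists>y y' y''. \<forall>r\<in>{0<..<R}. 0 < y r \<and> (y has_real_derivative y' r) (at r) \<and>
        (y' has_real_derivative y'' r) (at r) \<and>
        y'' r + ((real n - 1) / r + deriv (\<lambda>r. r powr - lam) r / r powr - lam) * y' r +
        (((real n - lam - 2) / 2)\<^sup>2 * r powr (- lam - 2) + r powr - lam * P r) / r powr - lam * y r = 0"
      using sol by blast
  qed
qed

end
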